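(* Let $M$ be a model of $\mathrm{AA}_0$. The following are equivalent: (i) $(M,\le)$ is linearly ordered; (ii) there is no $x\in M$ with $0<x<1$; (iii) for every $x\in M$, either $x=0$ or $|x|=1$; (iv) $M$ is a model of $\mathrm{PA}^-$.
   Context: Structures are complete metric spaces $(M,d)$ of diameter at most $1$ in the language $L=\{+,\cdot,\wedge,\vee,0,1\}$, all operations $1$-Lipschitz (sum metric on products), $d$ the only relation symbol; conditions are written with affine formulas (built from $1$ and $d(t_1,t_2)$ using $+$, scalar multiplication, $\sup$, $\inf$) and free variables are universally quantified. Notation: $|x|=d(x,0)$; $x\le y$ means $x\wedge y=x$; $x<y$ means $x\le y$ and $x\ne y$; $nx$ and $x^n$ are iterated sums/products. $\mathrm{AA}_0$ is the set of conditions: (A1) the identities of the nonnegative part of a lattice-ordered commutative ring with identity (commutative semiring axioms for $+,\cdot,0,1$, lattice axioms for $\wedge,\vee$, distributivity of $+$ and $\cdot$ over $\wedge,\vee$, and $0\le x$); (A2) $\inf_y d(x,(x\wedge y)+1)=1-|x|$ and $x\le x^2$; (A3) $d(x+z,y+z)=d(x,y)$; (A4) $d(y,z)\le d(xy,xz)+1-|x|$; (A5) $d(xy,xz)=d(x^ny,x^nz)\le d(y,z)$; (A6) $d(nx,ny)=d(x^n,y^n)=d(x,y)$ for $n\ge1$; (A7) $|x\wedge y|+|x\vee y|=|x|+|y|$; (A8) $|xy+z|=|(x\wedge y)+z|$; (A9) $|x+y+z|=|(x\vee y)+z|$; (A10) $\inf_t d((x\wedge y)+t,y)=0$. $\mathrm{PA}^-$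 is the first-order theory (models taken with the discrete metric) of nonnegative parts of lattice-ordered commutative rings with identity whose order is linear and discrete. *)

theory Defs
  imports Main "HOL.Real"
begin

text \<open>An L-structure: metric d, operations +, *, meet, join, constants 0, 1.
  The carrier is the whole type 'a.\<close>

record 'a lstr =
  dd  :: "'a \<Rightarrow> 'a \<Rightarrow> real"
  pl  :: "'a \<Rightarrow> 'a \<Rightarrow> 'a"
  tm  :: "'a \<Rightarrow> 'a \<Rightarrow> 'a"
  mt  :: "'a \<Rightarrow> 'a \<Rightarrow> 'a"
  jn  :: "'a \<Rightarrow> 'a \<Rightarrow> 'a"
  zr  :: 'a
  un  :: 'a

definition nrm :: "'a lstr \<Rightarrow> 'a \<Rightarrow> real" where
  "nrm M x = dd M x (zr M)"

definition le :: "'a lstr \<Rightarrow> 'a \<Rightarrow> 'a \<Rightarrow> bool" where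
  "le M x y \<longleftrightarrow> mt M x y = x"

definition lt :: "'a lstr \<Rightarrow> 'a \<Rightarrow> 'a \<Rightarrow> bool" where
  "lt M x y \<longleftrightarrow> le M x y \<and> x \<noteq> y"

fun nsum :: "'a lstr \<Rightarrow> nat \<Rightarrow> 'a \<Rightarrow> 'a" where
  "nsum M 0 x = zr M"
| "nsum M (Suc n) x = pl M x (nsum M n x)"

fun npow :: "'a lstr \<Rightarrow> 'a \<Rightarrow> nat \<Rightarrow> 'a" where
  "npow M x 0 = un M"
| "npow M x (Suc n) = tm M x (npow M x n)"

definition metric_structure :: "'a lstr \<Rightarrow> bool" where
  "metric_structure M \<longleftrightarrow>
     (\<forall>x y. dd M x y = 0 \<longleftrightarrow> x = y) \<and>
     (\<forall>x y. dd M x y = dd M y x) \<and>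
     (\<forall>x y z. dd M x z \<le> dd M x y + dd M y z) \<and>
     (\<forall>x y. dd M x y \<le> 1) \<and>
     (\<forall>X :: nat \<Rightarrow> 'a.
        (\<forall>e>0. \<exists>N. \<forall>m\<ge>N. \<forall>n\<ge>N. dd M (X m) (X n) < e) \<longrightarrow>
        (\<exists>l. \<forall>e>0. \<exists>N. \<forall>n\<ge>N. dd M (X n) l < e)) \<and>
     (\<forall>f \<in> {pl M, tm M, mt M, jn M}. \<forall>x y x' y'.
        dd M (f x y) (f x' y') \<le> dd M x x' + dd M y y')"

text \<open>(A1): identities of the nonnegative part of a lattice-ordered commutative ring with 1.\<close>
definition A1 :: "'a lstr \<Rightarrow> bool" where
  "A1 M \<longleftrightarrow>
     (\<forall>x y z. pl M (pl M x y) z = pl M x (pl M y z)) \<and>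
     (\<forall>x y. pl M x y = pl M y x) \<and>
     (\<forall>x. pl M x (zr M) = x) \<and>
     (\<forall>x y z. tm M (tm M x y) z = tm M x (tm M y z)) \<and>
     (\<forall>x y. tm M x y = tm M y x) \<and>
     (\<forall>x. tm M x (un M) = x) \<and>
     (\<forall>x. tm M x (zr M) = zr M) \<and>
     (\<forall>x y z. tm M x (pl M y z) = pl M (tm M x y) (tm M x z)) \<and>
     (\<forall>x y z. mt M (mt M x y) z = mt M x (mt M y z)) \<and>
     (\<forall>x y. mt M x y = mt M y x) \<and>
     (\<forall>x. mt M x x = x) \<and>
     (\<forall>x y z. jn M (jn M x y) z = jn M x (jn M y z)) \<and>
     (\<forall>x y. jn M x y = jn M y x) \<and>
     (\<forall>x. jn M x x = x) \<and>
     (\<forall>x y. mt M x (jn M x y) = x) \<and>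
     (\<forall>x y. jn M x (mt M x y) = x) \<and>
     (\<forall>x y z. pl M x (mt M y z) = mt M (pl M x y) (pl M x z)) \<and>
     (\<forall>x y z. pl M x (jn M y z) = jn M (pl M x y) (pl M x z)) \<and>
     (\<forall>x y z. tm M x (mt M y z) = mt M (tm M x y) (tm M x z)) \<and>
     (\<forall>x y z. tm M x (jn M y z) = jn M (tm M x y) (tm M x z)) \<and>
     (\<forall>x. le M (zr M) x)"

definition AA0 :: "'a lstr \<Rightarrow> bool" where
  "AA0 M \<longleftrightarrow> metric_structure M \<and> A1 M \<and>
     \<comment> \<open>(A2)\<close>
     (\<forall>x. (INF y. dd M x (pl M (mt M x y) (un M))) = 1 - nrm M x) \<and>
     (\<forall>x. le M x (tm M x x)) \<and>
     \<comment> \<open>(A3)\<close>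
     (\<forall>x y z. dd M (pl M x z) (pl M y z) = dd M x y) \<and>
     \<comment> \<open>(A4)\<close>
     (\<forall>x y z. dd M y z \<le> dd M (tm M x y) (tm M x z) + 1 - nrm M x) \<and>
     \<comment> \<open>(A5)\<close>
     (\<forall>n\<ge>1. \<forall>x y z. dd M (tm M x y) (tm M x z) = dd M (tm M (npow M x n) y) (tm M (npow M x n) z)
                 \<and> dd M (tm M (npow M x n) y) (tm M (npow M x n) z) \<le> dd M y z) \<and>
     \<comment> \<open>(A6)\<close>
     (\<forall>n\<ge>1. \<forall>x y. dd M (nsum M n x) (nsum M n y) = dd M x y
                 \<and> dd M (npow M x n) (npow M y n) = dd M x y) \<and>
     \<comment> \<open>(A7)\<close>
     (\<forall>x y. nrm M (mt M x y) + nrm M (jn M x y) = nrm M x + nrm M y) \<and>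
     \<comment> \<open>(A8)\<close>
     (\<forall>x y z. nrm M (pl M (tm M x y) z) = nrm M (pl M (mt M x y) z)) \<and>
     \<comment> \<open>(A9)\<close>
     (\<forall>x y z. nrm M (pl M (pl M x y) z) = nrm M (pl M (jn M x y) z)) \<and>
     \<comment> \<open>(A10)\<close>
     (\<forall>x y. (INF t. dd M (pl M (mt M x y) t) y) = 0)"

text \<open>PA^-: the first-order theory (with discrete metric) of nonnegative parts of
  discretely linearly ordered commutative rings with identity, in the language
  {+,*,meet,join,0,1}; axiomatized in the standard (Kaye) way, with the order
  given by x \<le> y iff meet x y = x.\<close>
definition PA_minus :: "'a lstr \<Rightarrow> bool" where
  "PA_minus M \<longleftrightarrow>
     (\<forall>x y. x \<noteq> y \<longrightarrow> dd M x y = 1) \<and>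
     A1 M \<and>
     (\<forall>x y. le M x y \<or> le M y x) \<and>
     (\<forall>x y z. lt M x y \<longrightarrow> lt M (pl M x z) (pl M y z)) \<and>
     (\<forall>x y z. lt M (zr M) z \<and> lt M x y \<longrightarrow> lt M (tm M x z) (tm M y z)) \<and>
     (\<forall>x y. le M x y \<longrightarrow> (\<exists>z. pl M x z = y)) \<and>
     lt M (zr M) (un M) \<and>
     (\<forall>x. lt M (zr M) x \<longrightarrow> le M (un M) x)"

end

theory Submission imports Defs begin

locale aa = fixes M :: "'a lstr" assumes ax: "AA0 M"
begin

lemma ms: "metric_structure M" using ax unfolding AA0_def by (elim conjE) iprover
lemma a1: "A1 M" using ax unfolding AA0_def by (elim conjE) iprover

lemma d0: "dd M x y = 0 \<longleftrightarrow> x = y" using ms unfolding metric_structure_def by blast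
lemma dsym: "dd M x y = dd M y x" using ms unfolding metric_structure_def by blast
lemma dtri: "dd M x z \<le> dd M x y + dd M y z" using ms unfolding metric_structure_def by blast
lemma dle1: "dd M x y \<le> 1" using ms unfolding metric_structure_def by blast
lemma lipall: "\<forall>f \<in> {pl M, tm M, mt M, jn M}. \<forall>x y x' y'.
        dd M (f x y) (f x' y') \<le> dd M x x' + dd M y y'" using ms unfolding metric_structure_def by blast
lemma lipmt: "dd M (mt M x y) (mt M x' y') \<le> dd M x x' + dd M y y'" using lipall by blast
lemma dxx: "dd M x x = 0" using d0 by blast
lemma dnn: "dd M x y \<ge> 0" using dtri[where x=x and y=y and z=x] dsym[of x y] dxx[of x] by linarith

lemma pa: "pl M (pl M x y) z = pl M x (pl M y z)" using a1 unfolding A1_def by (elim conjE) iprover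
lemma pc: "pl M x y = pl M y x" using a1 unfolding A1_def by (elim conjE) iprover
lemma p0: "pl M x (zr M) = x" using a1 unfolding A1_def by (elim conjE) iprover
lemma ta: "tm M (tm M x y) z = tm M x (tm M y z)" using a1 unfolding A1_def by (elim conjE) iprover
lemma tc: "tm M x y = tm M y x" using a1 unfolding A1_def by (elim conjE) iprover
lemma t1: "tm M x (un M) = x" using a1 unfolding A1_def by (elim conjE) iprover
lemma t0: "tm M x (zr M) = zr M" using a1 unfolding A1_def by (elim conjE) iprover
lemma tp: "tm M x (pl M y z) = pl M (tm M x y) (tm M x z)" using a1 unfolding A1_def by (elim conjE) iprover
lemma ma: "mt M (mt M x y) z = mt M x (mt M y z)" using a1 unfolding A1_def by (elim conjE) iprover
lemma mc: "mt M x y = mt M y x" using a1 unfolding A1_def by (elim conjE) iprover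
lemma mi: "mt M x x = x" using a1 unfolding A1_def by (elim conjE) iprover
lemma pm: "pl M x (mt M y z) = mt M (pl M x y) (pl M x z)" using a1 unfolding A1_def by (elim conjE) iprover
lemma tmm: "tm M x (mt M y z) = mt M (tm M x y) (tm M x z)" using a1 unfolding A1_def by (elim conjE) iprover
lemma z_le: "le M (zr M) x" using a1 unfolding A1_def by (elim conjE) iprover

lemma A2a: "(INF y. dd M x (pl M (mt M x y) (un M))) = 1 - nrm M x" using ax unfolding AA0_def by (elim conjE) iprover
lemma A2b: "le M x (tm M x x)" using ax unfolding AA0_def by (elim conjE) iprover
lemma A3: "dd M (pl M x z) (pl M y z) = dd M x y" using ax unfolding AA0_def by (elim conjE) iprover
lemma A4: "dd M y z \<le> dd M (tm M x y) (tm M x z) + 1 - nrm M x" using ax unfolding AA0_def by (elim conjE) iprover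
lemma A5all: "\<forall>n\<ge>1. \<forall>x y z. dd M (tm M x y) (tm M x z) = dd M (tm M (npow M x n) y) (tm M (npow M x n) z)
                 \<and> dd M (tm M (npow M x n) y) (tm M (npow M x n) z) \<le> dd M y z" using ax unfolding AA0_def by (elim conjE) iprover
lemma A5: "dd M (tm M x y) (tm M x z) \<le> dd M y z"
  using A5all[rule_format, of 1 x y z] by (simp add: t1 tc[of x "un M"])
lemma A8: "nrm M (pl M (tm M x y) z) = nrm M (pl M (mt M x y) z)" using ax unfolding AA0_def by (elim conjE) iprover
lemma A10: "(INF t. dd M (pl M (mt M x y) t) y) = 0" using ax unfolding AA0_def by (elim conjE) iprover

lemma A8': "nrm M (tm M x y) = nrm M (mt M x y)" using A8[of x y "zr M"] by (simp add: p0)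
lemma A3': "dd M (pl M z x) (pl M z y) = dd M x y" using A3 pc by metis

lemma le_refl: "le M x x" by (simp add: le_def mi)
lemma le_trans: "le M x y \<Longrightarrow> le M y z \<Longrightarrow> le M x z" unfolding le_def by (metis ma)
lemma le_antisym: "le M x y \<Longrightarrow> le M y x \<Longrightarrow> x = y" unfolding le_def by (metis mc)
lemma mt_le1: "le M (mt M x y) x" unfolding le_def by (metis ma mc mi)
lemma mt_le2: "le M (mt M x y) y" unfolding le_def by (metis ma mi)
lemma m0: "mt M (zr M) x = zr M" using z_le le_def by metis
lemma m0': "mt M x (zr M) = zr M" using m0 mc by metis
lemma pl_mono: "le M x y \<Longrightarrow> le M (pl M z x) (pl M z y)" unfolding le_def by (metis pm)
lemma tm_mono: "le M x y \<Longrightarrow> le M (tm M z x) (tm M z y)" unfolding le_def by (metis tmm)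
lemma one_le: "le M (un M) (pl M z (un M))"
proof -
  have "pl M (un M) (mt M (zr M) z) = mt M (pl M (un M) (zr M)) (pl M (un M) z)" by (rule pm)
  then have "un M = mt M (un M) (pl M (un M) z)" by (simp add: m0 p0)
  then show ?thesis unfolding le_def by (metis pc)
qed
lemma nrm_mono: "le M x y \<Longrightarrow> nrm M x \<le> nrm M y"
proof -
  assume "le M x y"
  then have "mt M y x = x" unfolding le_def by (metis mc)
  moreover have "dd M (mt M y x) (mt M (zr M) x) \<le> dd M y (zr M) + dd M x x" by (rule lipmt)
  ultimately show ?thesis by (simp add: nrm_def m0 dxx)
qed
lemma nrm_nn: "nrm M x \<ge> 0" by (simp add: nrm_def dnn)
lemma nrm_le1: "nrm M x \<le> 1" by (simp add: nrm_def dle1)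
lemma nrm0: "nrm M x = 0 \<longleftrightarrow> x = zr M" by (simp add: nrm_def d0)

lemma nrm_one: "nrm M (un M) = 1"
proof -
  have "(INF y. dd M (zr M) (pl M (mt M (zr M) y) (un M))) = 1 - nrm M (zr M)" by (rule A2a)
  then have "dd M (zr M) (un M) = 1" by (simp add: m0 pc[of "zr M"] p0 nrm_def dxx)
  then show ?thesis by (simp add: nrm_def dsym)
qed
lemma one_ne0: "un M \<noteq> zr M" using nrm_one nrm0 by force

lemma key1: "dd M (mt M x (un M)) (un M) \<le> 1 - nrm M x"
proof -
  have "dd M (mt M x (un M)) (un M) \<le> (INF y. dd M x (pl M (mt M x y) (un M)))"
  proof (rule cINF_greatest)
    fix y
    let ?w = "pl M (mt M x y) (un M)"
    have "le M (un M) ?w" using one_le by simp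
    then have e: "mt M ?w (un M) = un M" unfolding le_def by (metis mc)
    have "dd M (mt M x (un M)) (mt M ?w (un M)) \<le> dd M x ?w + dd M (un M) (un M)" by (rule lipmt)
    then show "dd M (mt M x (un M)) (un M) \<le> dd M x ?w" using e by (simp add: dxx)
  qed simp
  then show ?thesis using A2a by simp
qed


lemma L_N:
  assumes lin: "\<forall>x y. le M x y \<or> le M y x" and x1: "le M x (un M)"
  shows "x = zr M \<or> x = un M"
proof -
  have mx: "mt M x (un M) = x" using x1 le_def by metis
  have "tm M x (mt M x (un M)) = mt M (tm M x x) (tm M x (un M))" by (rule tmm)
  then have "tm M x x = mt M (tm M x x) x" by (simp add: mx t1)
  then have "le M (tm M x x) x" unfolding le_def by simp
  then have xx: "tm M x x = x" using A2b le_antisym by blast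
  have bnd: "min (nrm M x) (dd M x (un M) / 2) \<le> dd M (pl M x t) (un M)" for t
  proof -
    have "dd M (tm M x (pl M x t)) (tm M x (un M)) \<le> dd M (pl M x t) (un M)" by (rule A5)
    moreover have "tm M x (pl M x t) = pl M x (tm M x t)" by (simp add: tp xx)
    moreover have "dd M (pl M x (tm M x t)) x = nrm M (tm M x t)"
      using A3'[of x "tm M x t" "zr M"] by (simp add: p0 nrm_def)
    ultimately have h: "nrm M (tm M x t) \<le> dd M (pl M x t) (un M)" by (simp add: t1)
    show ?thesis
    proof (cases "le M x t")
      case True
      then have "le M (tm M x x) (tm M x t)" by (rule tm_mono)
      then have "nrm M x \<le> nrm M (tm M x t)" using xx nrm_mono by simp
      then show ?thesis using h by linarith
    next
      case False
      then have "le M t x" using lin by blast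
      then have "le M (tm M t t) (tm M t x)" by (rule tm_mono)
      then have "le M t (tm M x t)" using A2b le_trans tc by metis
      then have nt: "nrm M t \<le> dd M (pl M x t) (un M)" using nrm_mono h by fastforce
      have "dd M x (pl M x t) = nrm M t"
        using A3'[of x "zr M" t] by (simp add: p0 nrm_def dsym)
      then have "dd M x (un M) \<le> nrm M t + dd M (pl M x t) (un M)"
        using dtri[where x=x and y="pl M x t" and z="un M"] by simp
      then show ?thesis using nt by linarith
    qed
  qed
  have "min (nrm M x) (dd M x (un M) / 2) \<le> (INF t. dd M (pl M (mt M x (un M)) t) (un M))"
    by (rule cINF_greatest) (auto simp: mx bnd)
  then have "min (nrm M x) (dd M x (un M) / 2) \<le> 0" using A10 by simp
  then have "nrm M x \<le> 0 \<or> dd M x (un M) \<le> 0" by linarith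
  then show ?thesis using nrm_nn[of x] nrm0[of x] dnn[of x "un M"] d0[of x "un M"] by force
qed

abbreviation "NoMid \<equiv> \<not> (\<exists>x. lt M (zr M) x \<and> lt M x (un M))"
abbreviation "Dsc \<equiv> (\<forall>x. x = zr M \<or> nrm M x = 1)"

lemma N_D:
  assumes N: NoMid
  shows "x = zr M \<or> nrm M x = 1"
proof -
  let ?u = "mt M x (un M)"
  have "le M (zr M) ?u" by (rule z_le)
  moreover have "le M ?u (un M)" by (rule mt_le2)
  ultimately have "?u = zr M \<or> ?u = un M" using N unfolding lt_def by metis
  then show ?thesis
  proof
    assume "?u = un M"
    then have "le M (un M) x" unfolding le_def by (metis mc)
    then have "nrm M (un M) \<le> nrm M x" by (rule nrm_mono)
    then show ?thesis using nrm_one nrm_le1[of x] by simp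
  next
    assume "?u = zr M"
    then have "dd M (zr M) (un M) \<le> 1 - nrm M x" using key1 by metis
    moreover have "dd M (zr M) (un M) = 1" using nrm_one by (simp add: nrm_def dsym)
    ultimately show ?thesis using nrm_nn[of x] nrm0[of x] by force
  qed
qed

lemma D_N:
  assumes D: Dsc
  shows NoMid
proof
  assume "\<exists>x. lt M (zr M) x \<and> lt M x (un M)"
  then obtain x where a: "lt M (zr M) x" and b: "lt M x (un M)" by blast
  then have "nrm M x = 1" using D lt_def by metis
  then have "dd M (mt M x (un M)) (un M) \<le> 0" using key1[of x] by simp
  then have "mt M x (un M) = un M" using dnn d0 by (meson order_antisym)
  moreover have "mt M x (un M) = x" using b unfolding lt_def le_def by blast
  ultimately show False using b unfolding lt_def by simp
qed

lemma C:
  assumes D: Dsc and xy: "le M x y"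
  shows "dd M x y = 0 \<or> dd M x y = 1"
proof -
  have bnd: "min (dd M x y) (1 - dd M x y) \<le> dd M (pl M x t) y" for t
  proof -
    have e: "dd M x (pl M x t) = nrm M t"
      using A3'[of x "zr M" t] by (simp add: p0 nrm_def dsym[of "zr M" t])
    have t1': "dd M x y \<le> dd M x (pl M x t) + dd M (pl M x t) y" by (rule dtri)
    have t2: "dd M x (pl M x t) \<le> dd M x y + dd M y (pl M x t)" by (rule dtri)
    have "dd M y (pl M x t) = dd M (pl M x t) y" by (rule dsym)
    then show ?thesis using D[rule_format, of t] e t1' t2 nrm0[of t] by (auto simp: p0)
  qed
  have mx: "mt M x y = x" using xy le_def by metis
  have "min (dd M x y) (1 - dd M x y) \<le> (INF t. dd M (pl M (mt M x y) t) y)"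
    by (rule cINF_greatest) (auto simp: mx bnd)
  then have "min (dd M x y) (1 - dd M x y) \<le> 0" using A10 by simp
  then show ?thesis using dnn[of x y] dle1[of x y] by linarith
qed

lemma D_sub:
  assumes D: Dsc and xy: "le M x y"
  shows "\<exists>t. pl M x t = y"
proof -
  have mx: "mt M x y = x" using xy le_def by metis
  have "\<exists>t. dd M (pl M x t) y < 1"
  proof (rule ccontr)
    assume "\<not> ?thesis"
    then have "1 \<le> (INF t. dd M (pl M (mt M x y) t) y)"
      by (intro cINF_greatest) (auto simp: mx not_less)
    then show False using A10 by simp
  qed
  then obtain t where t: "dd M (pl M x t) y < 1" by blast
  let ?w = "pl M x t"
  have "dd M (mt M ?w y) (mt M y y) \<le> dd M ?w y + dd M y y" by (rule lipmt)
  then have "dd M (mt M ?w y) y < 1" using t by (simp add: mi dxx)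
  then have "mt M ?w y = y" using C[OF D mt_le2[of ?w y]] d0 by force
  then have "le M y ?w" unfolding le_def by (metis mc)
  then have "?w = y" using C[OF D, of y ?w] t d0 dsym by force
  then show ?thesis by blast
qed

lemma D_L:
  assumes D: Dsc
  shows "le M a b \<or> le M b a"
proof -
  let ?m = "mt M a b"
  obtain t where t: "pl M ?m t = a" using D_sub[OF D mt_le1] by blast
  obtain s where s: "pl M ?m s = b" using D_sub[OF D mt_le2] by blast
  have "pl M ?m (mt M t s) = ?m" using pm[of ?m t s] t s by simp
  then have "dd M (pl M ?m (mt M t s)) (pl M ?m (zr M)) = 0" by (simp add: p0 dxx)
  then have ts: "mt M t s = zr M" using A3' d0 by metis
  then have "nrm M (tm M t s) = 0" using A8' nrm0 by metis
  then have ts2: "tm M t s = zr M" using nrm0 by blast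
  have "dd M s (zr M) \<le> dd M (tm M t s) (tm M t (zr M)) + 1 - nrm M t" by (rule A4)
  then have "nrm M s \<le> 1 - nrm M t" by (simp add: ts2 t0 dxx nrm_def)
  then have "t = zr M \<or> s = zr M" using D nrm_nn nrm0 by (metis add.commute diff_add_cancel add_le_same_cancel1 not_one_le_zero)
  then show ?thesis
  proof
    assume "t = zr M"
    then have "a = ?m" using t p0 by simp
    then show ?thesis unfolding le_def by simp
  next
    assume "s = zr M"
    then have "b = ?m" using s p0 by simp
    then show ?thesis unfolding le_def by (metis mc)
  qed
qed

lemma D_P:
  assumes D: Dsc
  shows "PA_minus M"
  unfolding PA_minus_def
proof (intro conjI allI impI)
  fix x y :: 'a assume "x \<noteq> y"
  then show "dd M x y = 1" using D_L[OF D, of x y] C[OF D, of x y] C[OF D, of y x] d0 dsym by metis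
next
  show "A1 M" by (rule a1)
next
  fix x y :: 'a show "le M x y \<or> le M y x" by (rule D_L[OF D])
next
  fix x y z :: 'a assume "lt M x y"
  then have "le M x y" "x \<noteq> y" unfolding lt_def by auto
  then show "lt M (pl M x z) (pl M y z)" unfolding lt_def
    using pl_mono[of x y z] pc A3[of x z y] d0 by metis
next
  fix x y z :: 'a assume a: "lt M (zr M) z \<and> lt M x y"
  then have xy: "le M x y" "x \<noteq> y" and z: "z \<noteq> zr M" unfolding lt_def by auto
  then have nz: "nrm M z = 1" using D by blast
  have "le M (tm M x z) (tm M y z)" using tm_mono[OF xy(1), of z] tc by metis
  moreover have "tm M x z \<noteq> tm M y z"
  proof
    assume "tm M x z = tm M y z"
    then have "dd M (tm M z x) (tm M z y) = 0" using tc dxx by metis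
    then have "dd M x y \<le> 0" using A4[of x y z] nz by simp
    then show False using xy(2) dnn d0 by (meson order_antisym)
  qed
  ultimately show "lt M (tm M x z) (tm M y z)" unfolding lt_def by simp
next
  fix x y :: 'a assume "le M x y" then show "\<exists>z. pl M x z = y" by (rule D_sub[OF D])
next
  show "lt M (zr M) (un M)" unfolding lt_def using z_le one_ne0 by metis
next
  fix x :: 'a assume x: "lt M (zr M) x"
  let ?u = "mt M x (un M)"
  have "?u = zr M \<or> ?u = un M" using D_N[OF D] z_le[of ?u] mt_le2[of x "un M"] unfolding lt_def by metis
  then show "le M (un M) x"
  proof
    assume "?u = un M" then show ?thesis unfolding le_def by (metis mc)
  next
    assume u: "?u = zr M"
    show ?thesis
    proof (cases "le M x (un M)")
      case True then have "x = ?u" unfolding le_def by simp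
      then show ?thesis using u x unfolding lt_def by simp
    next
      case False then have "le M (un M) x" using D_L[OF D] by blast
      then have "mt M (un M) x = un M" unfolding le_def .
      then show ?thesis using u one_ne0 mc by metis
    qed
  qed
qed

lemma P_D:
  assumes "PA_minus M"
  shows Dsc
  using assms unfolding PA_minus_def nrm_def by blast

end

theorem mainTheorem2:
  fixes M :: "'a lstr"
  assumes "AA0 M"
  shows "((\<forall>x y. le M x y \<or> le M y x) \<longleftrightarrow> \<not> (\<exists>x. lt M (zr M) x \<and> lt M x (un M)))
       \<and> (\<not> (\<exists>x. lt M (zr M) x \<and> lt M x (un M)) \<longleftrightarrow> (\<forall>x. x = zr M \<or> nrm M x = 1))
       \<and> ((\<forall>x. x = zr M \<or> nrm M x = 1) \<longleftrightarrow> PA_minus M)"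
proof -
  interpret aa M by standard (rule assms)
  have LN: "(\<forall>x y. le M x y \<or> le M y x) \<Longrightarrow> NoMid"
    using L_N unfolding lt_def by blast
  have ND: "NoMid \<Longrightarrow> Dsc" using N_D by blast
  have DL: "Dsc \<Longrightarrow> (\<forall>x y. le M x y \<or> le M y x)" using D_L by blast
  show ?thesis using LN ND DL D_N D_P P_D by blast
qed

end
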